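(* Let $P=(-1,0)$ and define $u=(u_1,u_2):\overline{B_1}\setminus\{P\}\to\mathbb R^2$ by $u(x)=(1-2|x|,0)$ for $|x|\le 1/2$, and for $0\le\varepsilon\le 1/2$ and $\theta\in[0,2\pi]$, $$u\big((1-\varepsilon)\cos\theta,(1-\varepsilon)\sin\theta\big)=\Big(\min\Big\{\tfrac{1-2\varepsilon}{2\pi\varepsilon}|\pi-\theta|,\,1\Big\},\,0\Big),$$ with the convention that for $\varepsilon=0$ (and $\theta\neq\pi$) the value is $(1,0)$. Let $\gamma:[0,1]\to\mathbb R^2\setminus\{P\}$ be continuous and injective, and let $a_1<b_1<a_2<b_2<\dots<a_N<b_N$ in $[0,1]$ be such that for each $i$, $\gamma((a_i,b_i))\subseteq B_1$ and $\gamma(a_i),\gamma(b_i)\in\partial B_1\setminus\{P\}$. For each $i$ let $\ell_i=\min_{t\in[a_i,b_i]}u_1(\gamma(t))$ and let $A_i$ be the closed arc of $\partial B_1\setminus\{P\}$ with endpoints $\gamma(a_i)$ and $\gamma(b_i)$. If $i\neq j$ and $A_i\subseteq A_j$, then $\ell_j\le\ell_i$.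
   Context: $B_r$ is the open disk of radius $r$ centred at the origin. The map $u$ is continuous on $\overline{B_1}\setminus\{P\}$, takes values in $[0,1]\times\{0\}$, and equals $(1,0)$ on $\partial B_1\setminus\{P\}$. *)

theory Defs
  imports "HOL-Analysis.Analysis"
begin

text \<open>The plane R^2 is modelled as the complex numbers; the point P = (-1,0) is -1.\<close>

definition P_pt :: complex where "P_pt = -1"

text \<open>For 1/2 \<le> |x| \<le> 1 we write |x| = 1 - eps and
  x = |x| (cos theta, sin theta) with theta = Arg2pi x in [0, 2 pi); the value at theta = 2 pi
  coincides with that at theta = 0, so this covers the paper's range [0, 2 pi].
  Only values on the closed unit disk minus P matter.\<close>
definition u1 :: "complex \<Rightarrow> real" where
  "u1 x = (if norm x \<le> 1/2 then 1 - 2 * norm x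
           else (let eps = 1 - norm x; theta = Arg2pi x in
                 if eps = 0 then 1
                 else min ((1 - 2*eps) / (2*pi*eps) * \<bar>pi - theta\<bar>) 1))"

definition u :: "complex \<Rightarrow> real \<times> real" where
  "u x = (u1 x, 0)"

text \<open>The closed arc of the unit circle minus P with endpoints p and q (both on the
  circle, different from P): points cis t with t between the arguments of p and q in (-pi, pi),
  i.e. the arc not passing through P.\<close>
definition circ_arc :: "complex \<Rightarrow> complex \<Rightarrow> complex set" where
  "circ_arc p q = {cis t | t. min (Arg p) (Arg q) \<le> t \<and> t \<le> max (Arg p) (Arg q)}"

end

theory Submission
  imports Defs
begin

lemma u1_sphere: "norm z = 1 \<Longrightarrow> u1 z = 1"
  by (simp add: u1_def)

lemma u1_le1: "u1 z \<le> 1"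
  by (simp add: u1_def Let_def)

lemma u1_nonneg: assumes "norm z \<le> 1" shows "0 \<le> u1 z"
proof (cases "norm z \<le> 1/2")
  case True then show ?thesis by (simp add: u1_def)
next
  case False
  have "0 \<le> (1 - 2*(1 - norm z)) / (2*pi*(1 - norm z)) * \<bar>pi - Arg2pi z\<bar>" if "1 - norm z \<noteq> 0"
    using False assms that by (intro mult_nonneg_nonneg divide_nonneg_nonneg) auto
  then show ?thesis using False by (auto simp: u1_def Let_def)
qed

lemma Arg2pi_polar:
  assumes "0 < r" "-pi \<le> phi" "phi \<le> pi"
  shows "\<bar>pi - Arg2pi (of_real r * cis phi)\<bar> = pi - \<bar>phi\<bar>"
proof (cases "0 \<le> phi")
  case True
  have "phi < 2*pi" using assms pi_gt_zero by linarith
  have "Arg2pi (of_real r * cis phi) = phi"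
    by (rule Arg2pi_unique[of r]) (use True assms \<open>phi < 2*pi\<close> in \<open>auto simp: cis_conv_exp\<close>)
  then show ?thesis using True assms by auto
next
  case False
  have "cis phi = cis (phi + 2*pi)" by (simp add: complex_eq_iff)
  then have "Arg2pi (of_real r * cis phi) = phi + 2*pi"
    using Arg2pi_unique[of r "phi + 2*pi"] False assms by (auto simp: cis_conv_exp)
  then show ?thesis using False assms by auto
qed

lemma polar_Arg: "x = of_real (norm x) * cis (Arg x)"
  by (cases "x = 0") (auto simp: cis_Arg sgn_div_norm scaleR_conv_of_real)

lemma Arg_polar:
  assumes "0 < r" "-pi < phi" "phi \<le> pi"
  shows "Arg (of_real r * cis phi) = phi"
  using assms by (metis Arg_times_of_real Arg_cis greaterThanAtMost_iff)

lemma u1_arc: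
  assumes x: "norm x < 1" and phi: "phi \<in> closed_segment (Arg x) (if 0 \<le> Arg x then pi else -pi)"
  shows "u1 (of_real (norm x) * cis phi) \<le> u1 x"
proof -
  define \<rho> where "\<rho> = norm x"
  have nz: "norm (of_real \<rho> * cis phi) = \<rho>" by (simp add: \<rho>_def norm_mult)
  show ?thesis
  proof (cases "\<rho> \<le> 1/2")
    case True then show ?thesis using nz by (simp add: u1_def \<rho>_def)
  next
    case False
    then have rpos: "0 < \<rho>" by simp
    have A: "-pi < Arg x" "Arg x \<le> pi" using Arg_bounded by auto
    have ph: "-pi \<le> phi \<and> phi \<le> pi \<and> \<bar>Arg x\<bar> \<le> \<bar>phi\<bar>"
      using phi A by (auto simp: closed_segment_eq_real_ivl split: if_splits)
    have e1: "\<bar>pi - Arg2pi (of_real \<rho> * cis phi)\<bar> = pi - \<bar>phi\<bar>"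
      using Arg2pi_polar[OF rpos] ph by auto
    have e2: "\<bar>pi - Arg2pi x\<bar> = pi - \<bar>Arg x\<bar>"
      using Arg2pi_polar[OF rpos, of "Arg x"] A polar_Arg[of x] by (simp add: \<rho>_def)
    have K: "0 \<le> (1 - 2*(1-\<rho>)) / (2*pi*(1-\<rho>))" using False x by (simp add: \<rho>_def)
    have "(1 - 2*(1-\<rho>)) / (2*pi*(1-\<rho>)) * (pi - \<bar>phi\<bar>) \<le> (1 - 2*(1-\<rho>)) / (2*pi*(1-\<rho>)) * (pi - \<bar>Arg x\<bar>)"
      using K ph by (intro mult_left_mono) auto
    then show ?thesis using False x nz e1 e2
      by (auto simp: u1_def Let_def \<rho>_def)
  qed
qed

lemma u1_ray:
  assumes x: "norm x < 1" and r: "norm x \<le> r" "r < 1"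
  shows "u1 (- of_real r) \<le> u1 x"
proof (cases "r \<le> 1/2")
  case True
  have "0 \<le> r" using r norm_ge_zero order_trans by blast
  then show ?thesis using r True by (simp add: u1_def)
next
  case False
  have "Arg2pi (- of_real r) = pi" using Arg2pi_of_real[of "-r"] False by simp
  then have "u1 (- of_real r) = 0" using False r by (simp add: u1_def Let_def)
  then show ?thesis using u1_nonneg[of x] x by simp
qed

lemma not_inside_big:
  fixes C :: "complex set"
  assumes "compact C" "C \<subseteq> cball 0 1" "y \<notin> C" "norm y \<ge> 1"
  shows "y \<notin> inside C"
proof -
  obtain e where e: "e > 0" "ball y e \<inter> C = {}"
    using assms compact_imp_closed[OF assms(1)] open_contains_ball[of "-C"]
    by (metis Compl_iff disjoint_eq_subset_Compl open_Compl)
  define T where "T = ball y e \<union> - cball 0 1"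
  have y0: "y \<noteq> 0" using assms by auto
  define w where "w = of_real (1 + e/(2*norm y)) * y"
  have "norm w = (1 + e/(2*norm y)) * norm y"
    using e unfolding w_def norm_mult norm_of_real by simp
  also have "\<dots> = norm y + e/2" using y0 by (simp add: field_simps)
  finally have nw: "norm w = norm y + e/2" .
  have "dist y w = norm (of_real (e/(2*norm y)) * y)"
    by (simp add: w_def dist_norm algebra_simps)
  also have "\<dots> = e/(2*norm y) * norm y" using e unfolding norm_mult norm_of_real by simp
  also have "\<dots> = e/2" using y0 by simp
  finally have dw: "dist y w < e" using e by simp
  have cc: "connected (- cball (0::complex) 1)"
    by (rule connected_complement_bounded_convex) auto
  have conT: "connected T" unfolding T_def
    by (rule connected_Un) (use cc dw nw assms(4) e in \<open>auto intro!: exI[of _ w]\<close>)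
  have ubT: "\<not> bounded T"
  proof
    assume "bounded T"
    then have "bounded (cball (0::complex) 1 \<union> T)" by simp
    moreover have "cball 0 1 \<union> T = UNIV" by (auto simp: T_def)
    ultimately show False using not_bounded_UNIV by metis
  qed
  have TC: "T \<subseteq> - C" using e assms(2) by (auto simp: T_def)
  have "y \<in> T" using e by (simp add: T_def)
  then have "T \<subseteq> connected_component_set (- C) y"
    by (rule connected_component_maximal[OF _ conT TC])
  then have "\<not> bounded (connected_component_set (- C) y)"
    using ubT bounded_subset by blast
  then have "y \<in> outside C" by (simp add: outside)
  then show ?thesis using inside_Int_outside by blast
qed
lemma continuous_on_cis': "continuous_on S cis"
proof -
  have "cis = (\<lambda>t. exp (\<i> * of_real t))" by (simp add: fun_eq_iff cis_conv_exp)
  then show ?thesis by (simp add: continuous_intros)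
qed

lemma sphere_Arg:
  assumes "p \<in> sphere (0::complex) 1 - {-1}"
  shows "cis (Arg p) = p" "-pi < Arg p" "Arg p < pi"
proof -
  have p0: "p \<noteq> 0" "norm p = 1" using assms by auto
  show 1: "cis (Arg p) = p" using p0 by (simp add: cis_Arg sgn_div_norm)
  show "-pi < Arg p" using Arg_bounded by auto
  have "Arg p \<noteq> pi" using 1 assms by (metis DiffD2 cis_pi insertI1)
  then show "Arg p < pi" using Arg_bounded[of p] by auto
qed

lemma circ_arc_eq: "circ_arc p q = cis ` closed_segment (Arg q) (Arg p)"
  by (auto simp: circ_arc_def closed_segment_eq_real_ivl min_def max_def split: if_splits)

lemma inj_cis_seg:
  assumes "-pi < s" "s \<le> pi" "-pi < t" "t \<le> pi"
  shows "inj_on cis (closed_segment s t)"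
proof
  fix x y assume "x \<in> closed_segment s t" "y \<in> closed_segment s t" "cis x = cis y"
  moreover have "x \<in> {-pi<..pi}" "y \<in> {-pi<..pi}"
    using calculation assms by (auto simp: closed_segment_eq_real_ivl split: if_splits)
  ultimately show "x = y" by (metis Arg_cis)
qed

lemma circ_arc_facts:
  assumes p: "p \<in> sphere (0::complex) 1 - {-1}" and q: "q \<in> sphere (0::complex) 1 - {-1}"
  shows "circ_arc p q \<subseteq> sphere 0 1" "-1 \<notin> circ_arc p q" "p \<in> circ_arc p q" "q \<in> circ_arc p q"
    "inj_on cis (closed_segment (Arg q) (Arg p))"
proof -
  note P = sphere_Arg[OF p] and Q = sphere_Arg[OF q]
  show "circ_arc p q \<subseteq> sphere 0 1" by (auto simp: circ_arc_eq)
  show inj: "inj_on cis (closed_segment (Arg q) (Arg p))"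
    by (rule inj_cis_seg) (use P Q in auto)
  show "-1 \<notin> circ_arc p q"
  proof
    assume "-1 \<in> circ_arc p q"
    then obtain t where t: "t \<in> closed_segment (Arg q) (Arg p)" "cis t = -1"
      by (auto simp: circ_arc_eq)
    then have "-pi < t" "t < pi" using P Q by (auto simp: closed_segment_eq_real_ivl split: if_splits)
    then have "Arg (cis t) = t" by (simp add: Arg_cis)
    moreover have "Arg (cis pi) = pi" by (rule Arg_cis) (simp add: pi_gt_zero)
    ultimately show False using t \<open>t < pi\<close> by (simp add: cis_pi)
  qed
  show "p \<in> circ_arc p q" unfolding circ_arc_eq using P(1) by (metis ends_in_segment(2) image_eqI)
  show "q \<in> circ_arc p q" unfolding circ_arc_eq using Q(1) by (metis ends_in_segment(1) image_eqI)
qed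

lemma jordan_setup:
  fixes \<gamma> :: "real \<Rightarrow> complex"
  assumes cont: "continuous_on {a..b} \<gamma>" and inj: "inj_on \<gamma> {a..b}" and ab: "a < b"
    and ins: "\<gamma> ` {a<..<b} \<subseteq> ball 0 1"
    and ea: "\<gamma> a \<in> sphere 0 1 - {-1}" and eb: "\<gamma> b \<in> sphere 0 1 - {-1}"
  shows "\<exists>c. simple_path c \<and> pathfinish c = pathstart c \<and>
           path_image c = \<gamma> ` {a..b} \<union> circ_arc (\<gamma> a) (\<gamma> b)"
proof -
  define g1 where "g1 = \<gamma> \<circ> linepath a b"
  define g2 where "g2 = cis \<circ> linepath (Arg (\<gamma> b)) (Arg (\<gamma> a))"
  have pl: "path_image (linepath a b) = {a..b}"
    using ab by (simp add: closed_segment_eq_real_ivl)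
  have im1: "path_image g1 = \<gamma> ` {a..b}" unfolding g1_def path_image_compose pl ..
  have im2: "path_image g2 = circ_arc (\<gamma> a) (\<gamma> b)" by (simp add: g2_def path_image_compose circ_arc_eq)
  have ne: "\<gamma> a \<noteq> \<gamma> b" using inj ab by (auto dest: inj_onD)
  have Ane: "Arg (\<gamma> b) \<noteq> Arg (\<gamma> a)" using ne sphere_Arg(1)[OF ea] sphere_Arg(1)[OF eb] by metis
  have arc1: "arc g1" unfolding arc_def
  proof
    show "path g1" unfolding g1_def by (rule path_continuous_image[OF path_linepath]) (simp only: pl cont)
    have "inj_on (linepath a b) {0..1}" using ab by (intro arc_imp_inj_on arc_linepath) simp
    moreover have "linepath a b ` {0..1} = {a..b}" using pl by (simp add: path_image_def)
    ultimately show "inj_on g1 {0..1}" unfolding g1_def using inj by (intro comp_inj_on) auto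
  qed
  have arc2: "arc g2" unfolding arc_def
  proof
    show "path g2" unfolding g2_def by (rule path_continuous_image) (auto simp: continuous_on_cis')
    have "inj_on (linepath (Arg (\<gamma> b)) (Arg (\<gamma> a))) {0..1}" using Ane by (intro arc_imp_inj_on arc_linepath) simp
    moreover have "linepath (Arg (\<gamma> b)) (Arg (\<gamma> a)) ` {0..1} = closed_segment (Arg (\<gamma> b)) (Arg (\<gamma> a))"
      by (metis path_image_def path_image_linepath)
    ultimately show "inj_on g2 {0..1}" unfolding g2_def using circ_arc_facts(5)[OF ea eb] by (intro comp_inj_on) auto
  qed
  have s1: "pathstart g1 = \<gamma> a" "pathfinish g1 = \<gamma> b" by (simp_all add: g1_def pathstart_compose pathfinish_compose)
  have s2: "pathstart g2 = \<gamma> b" "pathfinish g2 = \<gamma> a"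
    by (simp_all add: g2_def pathstart_compose pathfinish_compose sphere_Arg(1)[OF ea] sphere_Arg(1)[OF eb])
  have int: "path_image g1 \<inter> path_image g2 \<subseteq> {pathstart g1, pathstart g2}"
  proof
    fix z assume z: "z \<in> path_image g1 \<inter> path_image g2"
    then have "norm z = 1" using circ_arc_facts(1)[OF ea eb] im2 by auto
    moreover obtain t where t: "t \<in> {a..b}" "z = \<gamma> t" using z im1 by auto
    ultimately have "t = a \<or> t = b" using ins by force
    then show "z \<in> {pathstart g1, pathstart g2}" using t s1 s2 by auto
  qed
  have sp: "simple_path (g1 +++ g2)" by (rule simple_path_join_loop[OF arc1 arc2]) (use s1 s2 int in auto)
  have "path_image (g1 +++ g2) = \<gamma> ` {a..b} \<union> circ_arc (\<gamma> a) (\<gamma> b)"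
    using path_image_join[of g1 g2] s1 s2 im1 im2 by simp
  then show ?thesis
    by (intro exI[of _ "g1 +++ g2"]) (use sp s1 s2 in auto)
qed

lemma conn_inside:
  assumes "connected S" "S \<inter> C = {}" "S \<inter> inside C \<noteq> {}" "frontier (inside C) = C"
  shows "S \<subseteq> inside C"
  using connected_Int_frontier[OF assms(1) assms(3)] assms(2,4) by blast

lemma key:
  fixes \<gamma> :: "real \<Rightarrow> complex"
  assumes cont: "continuous_on {0..1} \<gamma>" and inj: "inj_on \<gamma> {0..1}"
    and avoid: "\<forall>t\<in>{0..1}. \<gamma> t \<noteq> -1"
    and ij: "0 \<le> ai" "ai < bi" "bi \<le> 1" "0 \<le> aj" "aj < bj" "bj \<le> 1"
    and disj: "{ai..bi} \<inter> {aj..bj} = {}"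
    and insi: "\<gamma> ` {ai<..<bi} \<subseteq> ball 0 1" and insj: "\<gamma> ` {aj<..<bj} \<subseteq> ball 0 1"
    and eai: "\<gamma> ai \<in> sphere 0 1 - {-1}" and ebi: "\<gamma> bi \<in> sphere 0 1 - {-1}"
    and eaj: "\<gamma> aj \<in> sphere 0 1 - {-1}" and ebj: "\<gamma> bj \<in> sphere 0 1 - {-1}"
    and sub: "circ_arc (\<gamma> ai) (\<gamma> bi) \<subseteq> circ_arc (\<gamma> aj) (\<gamma> bj)"
    and s: "s \<in> {ai<..<bi}"
  shows "\<exists>t\<in>{aj..bj}. u1 (\<gamma> t) \<le> u1 (\<gamma> s)"
proof -
  define A where "A = circ_arc (\<gamma> aj) (\<gamma> bj)"
  define G where "G = \<gamma> ` {aj..bj}"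
  obtain c where c: "simple_path c" "pathfinish c = pathstart c" "path_image c = G \<union> A"
  proof -
    have jsub: "{aj..bj} \<subseteq> {0..1}" using ij by auto
    show ?thesis using jordan_setup[OF continuous_on_subset[OF cont jsub] inj_on_subset[OF inj jsub] ij(5) insj eaj ebj] that
      unfolding A_def G_def by blast
  qed
  define C where "C = G \<union> A"
  have JIO: "frontier (inside C) = C" using Jordan_inside_outside[OF c(1,2)] c(3) by (simp add: C_def)
  have Cc: "compact C" using c(3) compact_path_image simple_path_imp_path[OF c(1)] by (metis C_def)
  have Asph: "A \<subseteq> sphere 0 1" using circ_arc_facts(1)[OF eaj ebj] by (simp add: A_def)
  have Gcb: "G \<subseteq> cball 0 1"
  proof
    fix z assume "z \<in> G"
    then obtain t where t: "t \<in> {aj..bj}" "z = \<gamma> t" by (auto simp: G_def)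
    then consider "t = aj" | "t = bj" | "t \<in> {aj<..<bj}" by fastforce
    then show "z \<in> cball 0 1" using t eaj ebj insj by cases force+
  qed
  have Ccb: "C \<subseteq> cball 0 1" using Asph Gcb by (auto simp: C_def)
  have Gcomp: "compact G" unfolding G_def
    by (rule compact_continuous_image[OF continuous_on_subset[OF cont]]) (use ij in auto)
  have inside_lt1: "norm y < 1" if "y \<in> inside C" for y
  proof (rule ccontr)
    assume "\<not> norm y < 1"
    moreover have "y \<notin> C" using that inside_no_overlap by blast
    ultimately show False using not_inside_big[OF Cc Ccb] that by force
  qed
  define p0 where "p0 = \<gamma> ai"
  have p0A: "p0 \<in> A" using sub circ_arc_facts(3)[OF eai ebi] by (auto simp: p0_def A_def)
  have p0G: "p0 \<notin> G"
  proof
    assume "p0 \<in> G"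
    then obtain t where t: "t \<in> {aj..bj}" "\<gamma> ai = \<gamma> t" by (auto simp: G_def p0_def)
    then have "ai = t" using inj ij by (intro inj_onD[OF inj]) auto
    then show False using t disj ij by auto
  qed
  have oG: "open (-G)" using compact_imp_closed[OF Gcomp] by auto
  obtain r where r0: "r > 0" "ball p0 r \<subseteq> -G"
    using p0G oG open_contains_ball by blast
  then have r: "r > 0" "ball p0 r \<inter> G = {}" by auto
  have "p0 \<in> closure (inside C)" using JIO p0A by (auto simp: C_def frontier_def)
  then obtain y where y: "y \<in> inside C" "dist y p0 < r"
    using r(1) closure_approachable by blast
  define W where "W = ball p0 r \<inter> ball 0 1"
  have Wc: "connected W" unfolding W_def by (intro convex_connected convex_Int) auto
  have WC: "W \<inter> C = {}" using r(2) Asph by (auto simp: W_def C_def)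
  have "y \<in> W" using y inside_lt1 by (auto simp: W_def dist_commute)
  then have Win: "W \<subseteq> inside C" using conn_inside[OF Wc WC _ JIO] y by blast
  obtain \<delta> where d: "\<delta> > 0" "\<forall>t\<in>{0..1}. dist t ai < \<delta> \<longrightarrow> dist (\<gamma> t) (\<gamma> ai) < r"
  proof -
    have "ai \<in> {0..1}" using ij by auto
    then show ?thesis using cont r(1) that unfolding continuous_on_iff by blast
  qed
  define t0 where "t0 = ai + min (\<delta>/2) ((bi - ai)/2)"
  have t0: "t0 \<in> {ai<..<bi}" using d(1) ij(2) unfolding t0_def by (auto simp: min_def field_simps)
  have "dist t0 ai < \<delta>" using d ij by (auto simp: t0_def dist_real_def)
  then have "\<gamma> t0 \<in> ball p0 r" using d t0 ij by (auto simp: p0_def dist_commute)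
  moreover have "\<gamma> t0 \<in> ball 0 1" using insi t0 by blast
  ultimately have g0: "\<gamma> t0 \<in> inside C" using Win unfolding W_def by blast
  define V where "V = \<gamma> ` {ai<..<bi}"
  have Vc: "connected V" unfolding V_def
    by (rule connected_continuous_image[OF continuous_on_subset[OF cont]]) (use ij in auto)
  have VC: "V \<inter> C = {}"
  proof -
    have "V \<inter> A = {}" using insi Asph unfolding V_def by fastforce
    moreover have "V \<inter> G = {}"
    proof (rule ccontr)
      assume "V \<inter> G \<noteq> {}"
      then obtain w where "w \<in> V" "w \<in> G" by blast
      then obtain t t' where tt: "t \<in> {ai<..<bi}" "t' \<in> {aj..bj}" "\<gamma> t = \<gamma> t'"
        unfolding V_def G_def by (metis imageE)
      then have "t = t'" using ij by (intro inj_onD[OF inj]) auto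
      then show False using tt disj by auto
    qed
    ultimately show ?thesis by (auto simp: C_def)
  qed
  have "\<gamma> t0 \<in> V" using t0 unfolding V_def by blast
  then have "V \<inter> inside C \<noteq> {}" using g0 by blast
  then have "V \<subseteq> inside C" using conn_inside[OF Vc VC _ JIO] by blast
  moreover have "\<gamma> s \<in> V" using s unfolding V_def by blast
  ultimately have xin: "\<gamma> s \<in> inside C" by blast
  define x where "x = \<gamma> s"
  define \<rho> where "\<rho> = norm x"
  define \<sigma> where "\<sigma> = (if 0 \<le> Arg x then pi else -pi)"
  have x1: "norm x < 1" using inside_lt1 xin by (simp add: x_def)
  define Q1 where "Q1 = (\<lambda>\<phi>. of_real \<rho> * cis \<phi>) ` closed_segment (Arg x) \<sigma>"
  define Q2 where "Q2 = (\<lambda>r. - of_real r :: complex) ` {\<rho>..2}"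
  have Q1c: "connected Q1" unfolding Q1_def
    by (intro connected_continuous_image continuous_intros continuous_on_cis'[THEN continuous_on_compose2]) auto
  have Q2c: "connected Q2" unfolding Q2_def
    by (intro connected_continuous_image continuous_intros) auto
  have cs: "cis \<sigma> = -1" by (simp add: \<sigma>_def cis_pi complex_eq_iff)
  have "- of_real \<rho> = of_real \<rho> * cis \<sigma>" using cs by simp
  moreover have "\<sigma> \<in> closed_segment (Arg x) \<sigma>" by simp
  ultimately have m1: "- of_real \<rho> \<in> Q1" unfolding Q1_def by blast
  have "\<rho> \<in> {\<rho>..2}" using x1 by (simp add: \<rho>_def)
  then have m2': "- of_real \<rho> \<in> Q2" unfolding Q2_def by blast
  have mr: "- of_real \<rho> \<in> Q1 \<inter> Q2" using m1 m2' by blast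
  have Qc: "connected (Q1 \<union> Q2)" using Q1c Q2c mr by (intro connected_Un) auto
  have "x \<in> Q1" using polar_Arg[of x] by (auto simp: Q1_def \<rho>_def intro!: image_eqI[of _ _ "Arg x"])
  then have Qin: "(Q1 \<union> Q2) \<inter> inside C \<noteq> {}" using xin by (auto simp: x_def)
  have m2: "-2 \<notin> inside C" using inside_lt1 by force
  have "-2 \<in> Q2" using x1 by (auto simp: Q2_def \<rho>_def intro!: image_eqI[of _ _ 2])
  then have Qout: "(Q1 \<union> Q2) - inside C \<noteq> {}" using m2 by blast
  obtain z where z: "z \<in> Q1 \<union> Q2" "z \<in> C"
    using connected_Int_frontier[OF Qc Qin Qout] JIO by blast
  have "z \<in> G \<and> u1 z \<le> u1 x"
  proof (cases "z \<in> Q1")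
    case True
    then obtain \<phi> where \<phi>: "\<phi> \<in> closed_segment (Arg x) \<sigma>" "z = of_real \<rho> * cis \<phi>" by (auto simp: Q1_def)
    then have "norm z < 1" using x1 by (simp add: norm_mult \<rho>_def)
    then have "z \<in> G" using z Asph by (auto simp: C_def)
    then show ?thesis using u1_arc[OF x1, of \<phi>] \<phi> by (simp add: \<rho>_def \<sigma>_def)
  next
    case False
    then obtain r where rr: "r \<in> {\<rho>..2}" "z = - of_real r" using z by (auto simp: Q2_def)
    have "norm z \<le> 1" using z Ccb by auto
    moreover have "z \<noteq> -1"
    proof
      assume "z = -1"
      moreover have "-1 \<notin> A" using circ_arc_facts(2)[OF eaj ebj] by (simp add: A_def)
      moreover have "-1 \<notin> G" using avoid ij by (auto simp: G_def)
      ultimately show False using z by (auto simp: C_def)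
    qed
    ultimately have "r < 1" using rr x1 by (auto simp: \<rho>_def)
    moreover have "0 \<le> r" using rr(1) norm_ge_zero[of x] unfolding \<rho>_def atLeastAtMost_iff by linarith
    ultimately have "norm z < 1" using rr by simp
    then have "z \<in> G" using z Asph by (auto simp: C_def)
    then show ?thesis using u1_ray[OF x1, of r] rr \<open>r < 1\<close> by (simp add: \<rho>_def)
  qed
  then show ?thesis by (auto simp: G_def x_def)
qed

theorem lemma3p1:
  fixes \<gamma> :: "real \<Rightarrow> complex" and a b :: "nat \<Rightarrow> real" and N :: nat
  assumes cont: "continuous_on {0..1} \<gamma>"
    and inj: "inj_on \<gamma> {0..1}"
    and avoidP: "\<forall>t\<in>{0..1}. \<gamma> t \<noteq> P_pt"
    and a1: "N \<ge> 1 \<longrightarrow> 0 \<le> a 1"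
    and bN: "N \<ge> 1 \<longrightarrow> b N \<le> 1"
    and ab: "\<forall>i\<in>{1..N}. a i < b i"
    and ba: "\<forall>i. 1 \<le> i \<and> i < N \<longrightarrow> b i < a (Suc i)"
    and inside: "\<forall>i\<in>{1..N}. \<gamma> ` {a i<..<b i} \<subseteq> ball 0 1"
    and ends_a: "\<forall>i\<in>{1..N}. \<gamma> (a i) \<in> sphere 0 1 - {P_pt}"
    and ends_b: "\<forall>i\<in>{1..N}. \<gamma> (b i) \<in> sphere 0 1 - {P_pt}"
  shows "\<forall>i\<in>{1..N}. \<forall>j\<in>{1..N}. i \<noteq> j \<longrightarrow>
           circ_arc (\<gamma> (a i)) (\<gamma> (b i)) \<subseteq> circ_arc (\<gamma> (a j)) (\<gamma> (b j)) \<longrightarrow>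
           (INF t\<in>{a j..b j}. fst (u (\<gamma> t))) \<le> (INF t\<in>{a i..b i}. fst (u (\<gamma> t)))"
proof (intro ballI impI)
  have order: "b i < a j" if "i \<in> {1..N}" "j \<in> {1..N}" "i < j" for i j
    using that
  proof (induction j)
    case 0 then show ?case by simp
  next
    case (Suc k)
    show ?case
    proof (cases "i = k")
      case True then show ?thesis using ba Suc.prems by auto
    next
      case False
      then have "b i < a k" using Suc by auto
      moreover have "a k < b k" using ab Suc.prems False by auto
      moreover have "b k < a (Suc k)" using ba Suc.prems False by auto
      ultimately show ?thesis by simp
    qed
  qed
  have bnd: "0 \<le> a i \<and> b i \<le> 1" if "i \<in> {1..N}" for i
  proof
    have "a 1 \<le> a i"
    proof (cases "i = 1")
      case False
      then have "b 1 < a i" using order[of 1 i] that by auto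
      then show ?thesis using ab that by force
    qed simp
    then show "0 \<le> a i" using a1 that by auto
    have "b i \<le> b N"
    proof (cases "i = N")
      case False
      then have "b i < a N" using order[of i N] that by auto
      moreover have "a N < b N" using ab that by auto
      ultimately show ?thesis by simp
    qed simp
    then show "b i \<le> 1" using bN that by auto
  qed
  have disj: "{a i..b i} \<inter> {a j..b j} = {}" if "i \<in> {1..N}" "j \<in> {1..N}" "i \<noteq> j" for i j
  proof (cases "i < j")
    case True then show ?thesis using order[OF that(1,2)] by auto
  next
    case False then have "j < i" using that by auto
    then show ?thesis using order[OF that(2,1)] by auto
  qed
  have Pm: "P_pt = -1" by (simp add: P_pt_def)
  fix i j assume i: "i \<in> {1..N}" and j: "j \<in> {1..N}" and ij: "i \<noteq> j"
    and sub: "circ_arc (\<gamma> (a i)) (\<gamma> (b i)) \<subseteq> circ_arc (\<gamma> (a j)) (\<gamma> (b j))"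
  have fu: "fst (u z) = u1 z" for z by (simp add: u_def)
  have ncb: "norm (\<gamma> t) \<le> 1" if tj: "t \<in> {a j..b j}" for t
  proof -
    consider "t = a j" | "t = b j" | "t \<in> {a j<..<b j}" using tj by fastforce
    then show ?thesis
    proof cases
      case 1 then show ?thesis using ends_a j by auto
    next
      case 2 then show ?thesis using ends_b j by auto
    next
      case 3 then have "\<gamma> t \<in> ball 0 1" using inside j by blast
      then show ?thesis by simp
    qed
  qed
  have bdd: "bdd_below ((\<lambda>t. fst (u (\<gamma> t))) ` {a j..b j})"
    by (rule bdd_belowI2[of _ 0]) (use ncb u1_nonneg in \<open>auto simp: fu\<close>)
  have low: "(INF t\<in>{a j..b j}. fst (u (\<gamma> t))) \<le> u1 (\<gamma> t)" if "t \<in> {a j..b j}" for t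
    using cINF_lower[OF bdd that] by (simp add: fu)
  have "a j < b j" using ab j by blast
  then have aj: "a j \<in> {a j..b j}" by simp
  show "(INF t\<in>{a j..b j}. fst (u (\<gamma> t))) \<le> (INF t\<in>{a i..b i}. fst (u (\<gamma> t)))"
  proof (rule cINF_greatest)
    have "a i < b i" using ab i by blast
    then show "{a i..b i} \<noteq> {}" by simp
  next
    fix s assume s: "s \<in> {a i..b i}"
    consider "s = a i" | "s = b i" | "s \<in> {a i<..<b i}" using s by fastforce
    then show "(INF t\<in>{a j..b j}. fst (u (\<gamma> t))) \<le> fst (u (\<gamma> s))"
    proof cases
      case 1
      then have "fst (u (\<gamma> s)) = 1" using ends_a i by (simp add: fu u1_sphere)
      then show ?thesis using low[OF aj] u1_le1[of "\<gamma> (a j)"] by simp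
    next
      case 2
      then have "fst (u (\<gamma> s)) = 1" using ends_b i by (simp add: fu u1_sphere)
      then show ?thesis using low[OF aj] u1_le1[of "\<gamma> (a j)"] by simp
    next
      case 3
      have "\<exists>t\<in>{a j..b j}. u1 (\<gamma> t) \<le> u1 (\<gamma> s)"
        by (rule key[OF cont inj _ _ _ _ _ _ _ disj[OF i j ij]])
           (use avoidP Pm bnd[OF i] bnd[OF j] ab i j inside ends_a ends_b sub 3 in auto)
      then obtain t where t: "t \<in> {a j..b j}" "u1 (\<gamma> t) \<le> u1 (\<gamma> s)" by blast
      then show ?thesis using low[OF t(1)] by (simp add: fu)
    qed
  qed
qed

end
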